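(* Let $D=(V,A)$ be a Steiner rooted $k$-arc-connected directed graph with root $r\in V$ and terminal set $S\subseteq V\setminus\{r\}$. (a) Let $s\in S$ and let $\mathcal{U}$ be a nonempty family of tight $s$-cuts. Then both $\bigcap_{U\in\mathcal{U}}U$ and $\bigcup_{U\in\mathcal{U}}U$ are tight $s$-cuts. (b) Let $S'\subseteq S$ be nonempty and, for each $s\in S'$, let $U_s$ be a tight $s$-cut. Suppose there is $s_0\in S'$ such that the number of arcs leaving $U_s\cup U_{s_0}$ is at least $k$ for all $s\in S'\setminus\{s_0\}$. Then $\bigcap_{s\in S'}U_s$ is a tight $s$-cut for every $s\in S'$.
   Context: $D$ is Steiner rooted $k$-arc-connected if for every $s\in S$ there are $k$ pairwise arc-disjoint directed $r$-$s$ paths. For $s\in S$, $U\subseteq V$ is an $s$-cut if $r\in U$ and $s\notin U$, and a tight $s$-cut if moreover exactly $k$ arcs of $D$ leave $U$. *)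

theory Defs
  imports "Graph_Theory.Graph_Theory"
begin

definition leaving :: "('a,'b) pre_digraph \<Rightarrow> 'a set \<Rightarrow> 'b set" where
  "leaving G U = {a \<in> arcs G. tail G a \<in> U \<and> head G a \<notin> U}"

definition steiner_rooted_k_arc_connected ::
  "('a,'b) pre_digraph \<Rightarrow> 'a \<Rightarrow> 'a set \<Rightarrow> nat \<Rightarrow> bool" where
  "steiner_rooted_k_arc_connected G r S k \<longleftrightarrow>
     r \<in> verts G \<and> S \<subseteq> verts G - {r} \<and>
     (\<forall>s\<in>S. \<exists>ps :: 'b list list. length ps = k \<and>
        (\<forall>i<k. pre_digraph.apath G r (ps ! i) s) \<and>
        (\<forall>i<k. \<forall>j<k. i \<noteq> j \<longrightarrow> set (ps ! i) \<inter> set (ps ! j) = {}))"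

definition s_cut :: "('a,'b) pre_digraph \<Rightarrow> 'a \<Rightarrow> 'a \<Rightarrow> 'a set \<Rightarrow> bool" where
  "s_cut G r s U \<longleftrightarrow> U \<subseteq> verts G \<and> r \<in> U \<and> s \<notin> U"

definition tight_s_cut :: "('a,'b) pre_digraph \<Rightarrow> 'a \<Rightarrow> nat \<Rightarrow> 'a \<Rightarrow> 'a set \<Rightarrow> bool" where
  "tight_s_cut G r k s U \<longleftrightarrow> s_cut G r s U \<and> card (leaving G U) = k"

end

theory Submission
  imports Defs
begin

lemma walk_leaving:
  assumes "wf_digraph G" "pre_digraph.awalk G u p v" "u \<in> U" "v \<notin> U"
  shows "\<exists>e\<in>set p. e \<in> leaving G U"
  using assms(2,3)
proof (induction p arbitrary: u)
  case Nil
  then show ?case using assms wf_digraph.awalk_Nil_iff by fastforce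
next
  case (Cons e es)
  have h: "e \<in> arcs G" "u = tail G e" "pre_digraph.awalk G (head G e) es v"
    using Cons.prems wf_digraph.awalk_Cons_iff[OF assms(1)] by auto
  show ?case
  proof (cases "head G e \<in> U")
    case True
    then show ?thesis using Cons.IH h by auto
  next
    case False
    then show ?thesis using h Cons.prems unfolding leaving_def by auto
  qed
qed

lemma leaving_ge:
  assumes "fin_digraph G" "steiner_rooted_k_arc_connected G r S k" "s \<in> S" "s_cut G r s U"
  shows "k \<le> card (leaving G U)"
proof -
  have wf: "wf_digraph G" using assms(1) fin_digraph.axioms(1) by blast
  obtain ps :: "'b list list" where ps: "length ps = k" "\<forall>i<k. pre_digraph.apath G r (ps ! i) s"
    "\<forall>i<k. \<forall>j<k. i \<noteq> j \<longrightarrow> set (ps ! i) \<inter> set (ps ! j) = {}"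
    using assms(2,3) unfolding steiner_rooted_k_arc_connected_def by blast
  have "\<forall>i<k. \<exists>e. e \<in> set (ps ! i) \<and> e \<in> leaving G U"
    using walk_leaving[OF wf] ps(2) assms(4) unfolding s_cut_def pre_digraph.apath_def by blast
  then obtain f where f: "\<And>i. i < k \<Longrightarrow> f i \<in> set (ps ! i) \<and> f i \<in> leaving G U" by metis
  have inj: "inj_on f {..<k}"
  proof (rule inj_onI)
    fix i j assume "i \<in> {..<k}" "j \<in> {..<k}" "f i = f j"
    then show "i = j" using f ps(3) by (metis disjoint_iff lessThan_iff)
  qed
  have fin: "finite (leaving G U)"
    using fin_digraph.finite_arcs[OF assms(1)] unfolding leaving_def by simp
  have "card (f ` {..<k}) \<le> card (leaving G U)"
    by (rule card_mono[OF fin]) (use f in auto)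
  then show ?thesis using card_image[OF inj] by simp
qed

lemma submod:
  assumes "fin_digraph G"
  shows "card (leaving G (X \<inter> Y)) + card (leaving G (X \<union> Y)) \<le> card (leaving G X) + card (leaving G Y)"
proof -
  have fa: "finite (arcs G)" using fin_digraph.finite_arcs[OF assms] .
  have c: "card (leaving G Z) = (\<Sum>a\<in>arcs G. if tail G a \<in> Z \<and> head G a \<notin> Z then 1 else 0)" for Z
    unfolding leaving_def using fa by (simp add: sum.If_cases Int_def)
  have "(\<Sum>a\<in>arcs G. (if tail G a \<in> X \<inter> Y \<and> head G a \<notin> X \<inter> Y then 1 else 0) +
        (if tail G a \<in> X \<union> Y \<and> head G a \<notin> X \<union> Y then 1 else 0))
     \<le> (\<Sum>a\<in>arcs G. (if tail G a \<in> X \<and> head G a \<notin> X then 1 else 0) +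
        (if tail G a \<in> Y \<and> head G a \<notin> Y then 1 else (0::nat)))"
    by (rule sum_mono) auto
  then show ?thesis unfolding c by (simp add: sum.distrib)
qed

lemma pair_tight:
  assumes "fin_digraph G" "steiner_rooted_k_arc_connected G r S k" "s \<in> S"
    "tight_s_cut G r k s X" "tight_s_cut G r k s Y"
  shows "tight_s_cut G r k s (X \<inter> Y) \<and> tight_s_cut G r k s (X \<union> Y)"
proof -
  have c1: "s_cut G r s (X \<inter> Y)" and c2: "s_cut G r s (X \<union> Y)"
    using assms(4,5) unfolding tight_s_cut_def s_cut_def by auto
  have k1: "k \<le> card (leaving G (X \<inter> Y))" by (rule leaving_ge[OF assms(1,2,3) c1])
  have k2: "k \<le> card (leaving G (X \<union> Y))" by (rule leaving_ge[OF assms(1,2,3) c2])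
  have cx: "card (leaving G X) = k" and cy: "card (leaving G Y) = k"
    using assms(4,5) unfolding tight_s_cut_def by auto
  have sm: "card (leaving G (X \<inter> Y)) + card (leaving G (X \<union> Y)) \<le> k + k"
    using submod[OF assms(1), of X Y] unfolding cx cy .
  have "card (leaving G (X \<inter> Y)) = k" using k1 k2 sm by linarith
  moreover have "card (leaving G (X \<union> Y)) = k" using k1 k2 sm by linarith
  ultimately show ?thesis using c1 c2 unfolding tight_s_cut_def by blast
qed

lemma family_tight:
  assumes "fin_digraph G" "steiner_rooted_k_arc_connected G r S k" "s \<in> S"
    "\<U> \<noteq> {}" "\<forall>U\<in>\<U>. tight_s_cut G r k s U"
  shows "tight_s_cut G r k s (\<Inter>\<U>) \<and> tight_s_cut G r k s (\<Union>\<U>)"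
proof -
  have sub: "\<U> \<subseteq> Pow (verts G)" using assms(5) unfolding tight_s_cut_def s_cut_def by blast
  have "finite (Pow (verts G))" using fin_digraph.finite_verts[OF assms(1)] by simp
  then have fin: "finite \<U>" using sub by (rule finite_subset[rotated])
  show ?thesis using fin assms(4,5)
  proof (induction \<U> rule: finite_ne_induct)
    case (singleton x)
    then show ?case by simp
  next
    case (insert x F)
    have tx: "tight_s_cut G r k s x" using insert.prems by simp
    have IH: "tight_s_cut G r k s (\<Inter>F)" "tight_s_cut G r k s (\<Union>F)"
      using insert.IH insert.prems by auto
    have a: "tight_s_cut G r k s (x \<inter> \<Inter>F)" using pair_tight[OF assms(1,2,3) tx IH(1)] by blast
    have b: "tight_s_cut G r k s (x \<union> \<Union>F)" using pair_tight[OF assms(1,2,3) tx IH(2)] by blast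
    show ?case using a b by (simp only: Inter_insert Union_insert)
  qed
qed

theorem lemma2p9:
  fixes G :: "('a,'b) pre_digraph" and r :: 'a and S :: "'a set" and k :: nat
  assumes "fin_digraph G"
    and "steiner_rooted_k_arc_connected G r S k"
  shows "(\<forall>s \<in> S. \<forall>\<U> :: 'a set set. \<U> \<noteq> {} \<and> (\<forall>U\<in>\<U>. tight_s_cut G r k s U) \<longrightarrow>
            tight_s_cut G r k s (\<Inter>\<U>) \<and> tight_s_cut G r k s (\<Union>\<U>))
     \<and> (\<forall>S' (U :: 'a \<Rightarrow> 'a set) s0. S' \<subseteq> S \<and> S' \<noteq> {} \<and>
            (\<forall>s\<in>S'. tight_s_cut G r k s (U s)) \<and> s0 \<in> S' \<and>
            (\<forall>s\<in>S' - {s0}. card (leaving G (U s \<union> U s0)) \<ge> k) \<longrightarrow>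
            (\<forall>s\<in>S'. tight_s_cut G r k s (\<Inter>s'\<in>S'. U s')))"
proof (intro conjI allI impI ballI)
  fix s \<U> assume "s \<in> S" "\<U> \<noteq> {} \<and> (\<forall>U\<in>\<U>. tight_s_cut G r k s U)"
  then show "tight_s_cut G r k s (\<Inter>\<U>)" "tight_s_cut G r k s (\<Union>\<U>)"
    using family_tight[OF assms] by auto
next
  fix S' and U :: "'a \<Rightarrow> 'a set" and s0 s
  assume H: "S' \<subseteq> S \<and> S' \<noteq> {} \<and> (\<forall>s\<in>S'. tight_s_cut G r k s (U s)) \<and> s0 \<in> S' \<and>
            (\<forall>s\<in>S' - {s0}. card (leaving G (U s \<union> U s0)) \<ge> k)" and s: "s \<in> S'"
  have s0S: "s0 \<in> S" using H by auto
  have t0: "tight_s_cut G r k s0 (U s0)" using H by auto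
  define \<V> where "\<V> = insert (U s0) ((\<lambda>t. U t \<inter> U s0) ` (S' - {s0}))"
  have V: "tight_s_cut G r k s0 V" if "V \<in> \<V>" for V
  proof -
    { fix t assume t: "t \<in> S' - {s0}" and V: "V = U t \<inter> U s0"
      have tt: "tight_s_cut G r k t (U t)" using H t by auto
      have sc1: "s_cut G r t (U t \<inter> U s0)"
        using tt t0 t unfolding tight_s_cut_def s_cut_def by auto
      have tS: "t \<in> S" using H t by auto
      have "k \<le> card (leaving G (U t \<inter> U s0))" using leaving_ge[OF assms tS sc1] .
      moreover have "k \<le> card (leaving G (U t \<union> U s0))" using H t by auto
      moreover have "card (leaving G (U t \<inter> U s0)) + card (leaving G (U t \<union> U s0)) \<le> k + k"
        using submod[OF assms(1), of "U t" "U s0"] tt t0 unfolding tight_s_cut_def by simp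
      ultimately have "card (leaving G V) = k" using V by simp
      moreover have "s_cut G r s0 V" using V t0 tt unfolding tight_s_cut_def s_cut_def by auto
      ultimately have ?thesis unfolding tight_s_cut_def by simp }
    then show ?thesis using that t0 unfolding \<V>_def by auto
  qed
  have eq: "\<Inter>\<V> = (\<Inter>s'\<in>S'. U s')" unfolding \<V>_def using H by auto
  have "tight_s_cut G r k s0 (\<Inter>\<V>)"
    using family_tight[OF assms s0S, of \<V>] V unfolding \<V>_def by auto
  then have "card (leaving G (\<Inter>s'\<in>S'. U s')) = k" using eq unfolding tight_s_cut_def by simp
  moreover have "s_cut G r s (\<Inter>s'\<in>S'. U s')"
    using H s unfolding tight_s_cut_def s_cut_def by blast
  ultimately show "tight_s_cut G r k s (\<Inter>s'\<in>S'. U s')" unfolding tight_s_cut_def by simp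
qed

end
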